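(* Let $(X,d)$ be a uniformly locally finite metric space and let $h,k\colon X\to\mathbb{R}$ be arbitrary maps. Regard $h$ and $k$ as (possibly unbounded) self-adjoint multiplication operators on $\ell_2(X)$ and let $\sigma_h,\sigma_k$ be the pre-flows on $\mathrm{C}^*_u(X)$ given by $\sigma_{h,t}(a)=e^{ith}ae^{-ith}$ and $\sigma_{k,t}(a)=e^{itk}ae^{-itk}$. The following are equivalent: (1) $h$ and $k$ are close, i.e. $\sup_{x\in X}|h_x-k_x|<\infty$; (2) the pre-flows $\sigma_h$ and $\sigma_k$ are inner perturbations of each other; (3) the pre-flows $\sigma_h$ and $\sigma_k$ are cocycle perturbations of each other.
   Context: A metric space is uniformly locally finite if $\sup_x|B_r(x)|<\infty$ for each $r>0$. A partial translation is a bijection $f\colon\mathrm{dom}(f)\subseteq X\to\mathrm{ran}(f)\subseteq X$ with $\sup_{x\in\mathrm{dom}(f)}d(x,f(x))<\infty$; $v_f\delta_x=\delta_{f(x)}$ for $x\in\mathrm{dom}(f)$, $v_f\delta_x=0$ otherwise; $\mathrm{C}^*_u(X)$ is the $\mathrm{C}^*$-subalgebra of $\mathcal{B}(\ell_2(X))$ generated by all $v_f$. The multiplication operator of $h$ has domain $\{\xi:\sum_x|h_x\xi_x|^2<\infty\}$ and acts by $(h\xi)_x=h_x\xi_x$. A pre-flow on a unital $\mathrm{C}^*$-algebra $A$ is a group homomorphism $\sigma\colon\mathbb{R}\to\mathrm{Aut}(A)$. A cocycle for $\sigma$ is a norm-continuous family of unitaries $(u_t)_{t\in\mathbb{R}}$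 in $A$ with $u_{t+s}=u_t\sigma_t(u_s)$ for all $t,s$; then $\rho_t(a)=u_t\sigma_t(a)u_t^*$ defines a cocycle perturbation $\rho$ of $\sigma$; if moreover such a cocycle can be chosen differentiable at $0$, $\rho$ is an inner perturbation of $\sigma$. *)

theory Defs
  imports "HOL-Analysis.Analysis"
begin

text \<open>Bounded operators on l2(X) are represented by their matrices
  m x y = (T delta_y)_x, acting by (m xi)_x = sum_y m x y * xi y.\<close>

type_synonym 'a mat = "'a \<Rightarrow> 'a \<Rightarrow> complex"

definition uniformly_locally_finite :: "'a::metric_space set \<Rightarrow> bool" where
  "uniformly_locally_finite X \<longleftrightarrow>
     (\<forall>r>0. \<exists>N::nat. \<forall>x\<in>X. finite (cball x r \<inter> X) \<and> card (cball x r \<inter> X) \<le> N)"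

definition ell2 :: "('a \<Rightarrow> complex) set" where
  "ell2 = {\<xi>. (\<lambda>x. (cmod (\<xi> x))\<^sup>2) summable_on UNIV}"

definition l2norm :: "('a \<Rightarrow> complex) \<Rightarrow> real" where
  "l2norm \<xi> = sqrt (\<Sum>\<^sub>\<infinity>x. (cmod (\<xi> x))\<^sup>2)"

definition mat_apply :: "'a mat \<Rightarrow> ('a \<Rightarrow> complex) \<Rightarrow> ('a \<Rightarrow> complex)" where
  "mat_apply m \<xi> = (\<lambda>x. \<Sum>\<^sub>\<infinity>y. m x y * \<xi> y)"

definition bounded_mat :: "'a mat \<Rightarrow> bool" where
  "bounded_mat m \<longleftrightarrow> (\<exists>C. \<forall>\<xi>\<in>ell2. (\<forall>x. (\<lambda>y. m x y * \<xi> y) summable_on UNIV)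
        \<and> mat_apply m \<xi> \<in> ell2 \<and> l2norm (mat_apply m \<xi>) \<le> C * l2norm \<xi>)"

definition opnorm :: "'a mat \<Rightarrow> real" where
  "opnorm m = Sup ((\<lambda>\<xi>. l2norm (mat_apply m \<xi>)) ` {\<xi>\<in>ell2. l2norm \<xi> \<le> 1})"

definition mat_mult :: "'a mat \<Rightarrow> 'a mat \<Rightarrow> 'a mat" where
  "mat_mult m n = (\<lambda>x z. \<Sum>\<^sub>\<infinity>y. m x y * n y z)"

definition mat_adj :: "'a mat \<Rightarrow> 'a mat" where
  "mat_adj m = (\<lambda>x y. cnj (m y x))"

definition mat_add :: "'a mat \<Rightarrow> 'a mat \<Rightarrow> 'a mat" where
  "mat_add m n = (\<lambda>x y. m x y + n x y)"

definition mat_diff :: "'a mat \<Rightarrow> 'a mat \<Rightarrow> 'a mat" where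
  "mat_diff m n = (\<lambda>x y. m x y - n x y)"

definition mat_scale :: "complex \<Rightarrow> 'a mat \<Rightarrow> 'a mat" where
  "mat_scale c m = (\<lambda>x y. c * m x y)"

definition mat_id :: "'a mat" where
  "mat_id = (\<lambda>x y. if x = y then 1 else 0)"

definition unitary_mat :: "'a mat \<Rightarrow> bool" where
  "unitary_mat u \<longleftrightarrow> bounded_mat u \<and> mat_mult u (mat_adj u) = mat_id \<and> mat_mult (mat_adj u) u = mat_id"

definition partial_translation :: "'a::metric_space set \<Rightarrow> ('a \<Rightarrow> 'a) \<Rightarrow> bool" where
  "partial_translation D f \<longleftrightarrow> inj_on f D \<and> (\<exists>C. \<forall>x\<in>D. dist x (f x) \<le> C)"

definition v_op :: "'a set \<Rightarrow> ('a \<Rightarrow> 'a) \<Rightarrow> 'a mat" where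
  "v_op D f = (\<lambda>x y. if y \<in> D \<and> f y = x then 1 else 0)"

inductive_set uniform_roe :: "'a::metric_space mat set" where
  gen: "partial_translation D f \<Longrightarrow> v_op D f \<in> uniform_roe"
| add: "a \<in> uniform_roe \<Longrightarrow> b \<in> uniform_roe \<Longrightarrow> mat_add a b \<in> uniform_roe"
| scale: "a \<in> uniform_roe \<Longrightarrow> mat_scale c a \<in> uniform_roe"
| mult: "a \<in> uniform_roe \<Longrightarrow> b \<in> uniform_roe \<Longrightarrow> mat_mult a b \<in> uniform_roe"
| adj: "a \<in> uniform_roe \<Longrightarrow> mat_adj a \<in> uniform_roe"
| lim: "(\<And>n. s n \<in> uniform_roe) \<Longrightarrow> bounded_mat a \<Longrightarrow>
        (\<lambda>n. opnorm (mat_diff (s n) a)) \<longlonglongrightarrow> 0 \<Longrightarrow> a \<in> uniform_roe"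

definition mult_flow :: "('a \<Rightarrow> real) \<Rightarrow> real \<Rightarrow> 'a mat \<Rightarrow> 'a mat" where
  "mult_flow h t a = (\<lambda>x y. exp (\<i> * of_real (t * h x)) * a x y * exp (- \<i> * of_real (t * h y)))"

definition norm_continuous :: "(real \<Rightarrow> 'a mat) \<Rightarrow> bool" where
  "norm_continuous u \<longleftrightarrow> (\<forall>t. ((\<lambda>s. opnorm (mat_diff (u s) (u t))) \<longlongrightarrow> 0) (at t))"

definition is_cocycle :: "'a mat set \<Rightarrow> (real \<Rightarrow> 'a mat \<Rightarrow> 'a mat) \<Rightarrow> (real \<Rightarrow> 'a mat) \<Rightarrow> bool" where
  "is_cocycle A \<sigma> u \<longleftrightarrow> (\<forall>t. u t \<in> A \<and> unitary_mat (u t)) \<and> norm_continuous u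
      \<and> (\<forall>t s. u (t + s) = mat_mult (u t) (\<sigma> t (u s)))"

definition norm_differentiable_at_0 :: "(real \<Rightarrow> 'a mat) \<Rightarrow> bool" where
  "norm_differentiable_at_0 u \<longleftrightarrow> (\<exists>D. bounded_mat D \<and>
     ((\<lambda>t. opnorm (mat_diff (mat_scale (complex_of_real (1 / t)) (mat_diff (u t) (u 0))) D)) \<longlongrightarrow> 0) (at 0))"

definition perturbed_by :: "'a mat set \<Rightarrow> (real \<Rightarrow> 'a mat \<Rightarrow> 'a mat) \<Rightarrow> (real \<Rightarrow> 'a mat \<Rightarrow> 'a mat) \<Rightarrow> (real \<Rightarrow> 'a mat) \<Rightarrow> bool" where
  "perturbed_by A \<rho> \<sigma> u \<longleftrightarrow> (\<forall>t. \<forall>a\<in>A. \<rho> t a = mat_mult (mat_mult (u t) (\<sigma> t a)) (mat_adj (u t)))"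

definition cocycle_perturbation :: "'a mat set \<Rightarrow> (real \<Rightarrow> 'a mat \<Rightarrow> 'a mat) \<Rightarrow> (real \<Rightarrow> 'a mat \<Rightarrow> 'a mat) \<Rightarrow> bool" where
  "cocycle_perturbation A \<rho> \<sigma> \<longleftrightarrow> (\<exists>u. is_cocycle A \<sigma> u \<and> perturbed_by A \<rho> \<sigma> u)"

definition inner_perturbation :: "'a mat set \<Rightarrow> (real \<Rightarrow> 'a mat \<Rightarrow> 'a mat) \<Rightarrow> (real \<Rightarrow> 'a mat \<Rightarrow> 'a mat) \<Rightarrow> bool" where
  "inner_perturbation A \<rho> \<sigma> \<longleftrightarrow>
     (\<exists>u. is_cocycle A \<sigma> u \<and> norm_differentiable_at_0 u \<and> perturbed_by A \<rho> \<sigma> u)"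

end

theory Submission imports Defs "HOL-Probability.Characteristic_Functions"
begin

definition dg :: "('a \<Rightarrow> complex) \<Rightarrow> 'a mat" where
  "dg d = (\<lambda>x y. if x = y then d x else 0)"

lemma infsum_at: "(\<Sum>\<^sub>\<infinity>y. if y = c then (a::'b::{comm_monoid_add,t2_space}) else 0) = a"
proof -
  have "(\<Sum>\<^sub>\<infinity>y. if y = c then a else 0) = (\<Sum>\<^sub>\<infinity>y\<in>{c}. if y = c then a else 0)"
    by (rule infsum_cong_neutral) auto
  then show ?thesis by simp
qed

lemma summable_at: "(\<lambda>y. if y = c then (a::'b::{comm_monoid_add,t2_space}) else 0) summable_on UNIV"
proof -
  have "(\<lambda>y. if y = c then a else 0) summable_on {c}" by simp
  then show ?thesis
    by (rule summable_on_cong_neutral[THEN iffD1, rotated -1]) auto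
qed

lemma dg_apply: "mat_apply (dg d) \<xi> = (\<lambda>x. d x * \<xi> x)"
proof
  fix x
  have "(\<lambda>y. dg d x y * \<xi> y) = (\<lambda>y. if y = x then d x * \<xi> x else 0)"
    by (auto simp: dg_def)
  then show "mat_apply (dg d) \<xi> x = d x * \<xi> x"
    unfolding mat_apply_def by (simp add: infsum_at)
qed

lemma dg_summ: "(\<lambda>y. dg d x y * \<xi> y) summable_on UNIV"
proof -
  have "(\<lambda>y. dg d x y * \<xi> y) = (\<lambda>y. if y = x then d x * \<xi> x else 0)"
    by (auto simp: dg_def)
  then show ?thesis by (simp add: summable_at)
qed

lemma l2_mult:
  assumes "\<xi> \<in> ell2" "\<And>x. cmod (d x) \<le> C"
  shows "(\<lambda>x. d x * \<xi> x) \<in> ell2 \<and> l2norm (\<lambda>x. d x * \<xi> x) \<le> C * l2norm \<xi>"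
proof -
  have C0: "0 \<le> C" using assms(2)[of undefined] norm_ge_zero[of "d undefined"] by linarith
  have s: "(\<lambda>x. (cmod (\<xi> x))\<^sup>2) summable_on UNIV" using assms(1) by (simp add: ell2_def)
  have s2: "(\<lambda>x. C\<^sup>2 * (cmod (\<xi> x))\<^sup>2) summable_on UNIV"
    by (rule summable_on_cmult_right[OF s])
  have le: "(cmod (d x * \<xi> x))\<^sup>2 \<le> C\<^sup>2 * (cmod (\<xi> x))\<^sup>2" for x
  proof -
    have "cmod (d x * \<xi> x) \<le> C * cmod (\<xi> x)"
      by (simp add: norm_mult assms(2) mult_right_mono)
    then have "(cmod (d x * \<xi> x))\<^sup>2 \<le> (C * cmod (\<xi> x))\<^sup>2"
      by (simp add: power_mono)
    then show ?thesis by (simp add: power_mult_distrib)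
  qed
  have s3: "(\<lambda>x. (cmod (d x * \<xi> x))\<^sup>2) summable_on UNIV"
    by (rule summable_on_comparison_test[OF s2]) (auto simp: le)
  have "(\<Sum>\<^sub>\<infinity>x. (cmod (d x * \<xi> x))\<^sup>2) \<le> (\<Sum>\<^sub>\<infinity>x. C\<^sup>2 * (cmod (\<xi> x))\<^sup>2)"
    by (rule infsum_mono[OF s3 s2]) (simp add: le)
  also have "\<dots> = C\<^sup>2 * (\<Sum>\<^sub>\<infinity>x. (cmod (\<xi> x))\<^sup>2)"
    by (rule infsum_cmult_right) (use s in auto)
  finally have "sqrt (\<Sum>\<^sub>\<infinity>x. (cmod (d x * \<xi> x))\<^sup>2) \<le> sqrt (C\<^sup>2 * (\<Sum>\<^sub>\<infinity>x. (cmod (\<xi> x))\<^sup>2))"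
    by (rule real_sqrt_le_mono)
  also have "\<dots> = C * l2norm \<xi>" using C0 by (simp add: l2norm_def real_sqrt_mult)
  finally show ?thesis using s3 by (simp add: ell2_def l2norm_def)
qed

lemma dg_bounded:
  assumes "\<And>x. cmod (d x) \<le> C"
  shows "bounded_mat (dg d)"
  unfolding bounded_mat_def
proof (intro exI[of _ C] ballI conjI allI)
  fix \<xi> :: "'a \<Rightarrow> complex" and x assume "\<xi> \<in> ell2"
  then show "(\<lambda>y. dg d x y * \<xi> y) summable_on UNIV" "mat_apply (dg d) \<xi> \<in> ell2"
    "l2norm (mat_apply (dg d) \<xi>) \<le> C * l2norm \<xi>"
    using l2_mult[OF _ assms, of \<xi>] dg_summ by (simp_all add: dg_apply)
qed

lemma dg_opnorm_le:
  assumes "\<And>x. cmod (d x) \<le> C"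
  shows "opnorm (dg d) \<le> C"
  unfolding opnorm_def
proof (rule cSup_least)
  have "(\<lambda>_::'a. 0::complex) \<in> ell2" by (simp add: ell2_def)
  moreover have "l2norm (\<lambda>_::'a. 0::complex) = 0" by (simp add: l2norm_def)
  ultimately have "(\<lambda>_::'a. 0::complex) \<in> {\<xi> \<in> ell2. l2norm \<xi> \<le> 1}" by simp
  then show "(\<lambda>\<xi>. l2norm (mat_apply (dg d) \<xi>)) ` {\<xi> \<in> ell2. l2norm \<xi> \<le> 1} \<noteq> {}" by blast
next
  have C0: "0 \<le> C" using assms[of undefined] norm_ge_zero[of "d undefined"] by linarith
  fix r assume "r \<in> (\<lambda>\<xi>. l2norm (mat_apply (dg d) \<xi>)) ` {\<xi> \<in> ell2. l2norm \<xi> \<le> 1}"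
  then obtain \<xi> where a: "\<xi> \<in> ell2" "l2norm \<xi> \<le> 1" "r = l2norm (mat_apply (dg d) \<xi>)" by auto
  have b: "l2norm (\<lambda>x. d x * \<xi> x) \<le> C * l2norm \<xi>" using l2_mult[OF a(1) assms] by simp
  have "C * l2norm \<xi> \<le> C" using a(2) C0 by (rule mult_left_le)
  then show "r \<le> C" using a(3) b by (simp add: dg_apply)
qed

lemma dg_opnorm_ge:
  assumes "\<And>x. cmod (d x) \<le> C"
  shows "cmod (d x0) \<le> opnorm (dg d)"
  unfolding opnorm_def
proof (rule cSup_upper)
  have C0: "0 \<le> C" using assms[of undefined] norm_ge_zero[of "d undefined"] by linarith
  define \<delta> :: "_ \<Rightarrow> complex" where "\<delta> = (\<lambda>y. if y = x0 then 1 else 0)"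
  have e1: "(\<lambda>x. (cmod (\<delta> x))\<^sup>2) = (\<lambda>x. if x = x0 then 1 else 0)" by (auto simp: \<delta>_def)
  have "\<delta> \<in> ell2" unfolding ell2_def mem_Collect_eq e1 by (simp add: summable_at)
  moreover have "l2norm \<delta> = 1" unfolding l2norm_def e1 by (simp add: infsum_at)
  moreover have e2: "(\<lambda>x. (cmod (d x * \<delta> x))\<^sup>2) = (\<lambda>x. if x = x0 then (cmod (d x0))\<^sup>2 else 0)"
    by (auto simp: \<delta>_def)
  have "l2norm (mat_apply (dg d) \<delta>) = cmod (d x0)"
    unfolding dg_apply l2norm_def e2 by (simp add: infsum_at)
  ultimately show "cmod (d x0) \<in> (\<lambda>\<xi>. l2norm (mat_apply (dg d) \<xi>)) ` {\<xi> \<in> ell2. l2norm \<xi> \<le> 1}"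
    by (metis (mono_tags, lifting) image_eqI mem_Collect_eq order_refl)
  show "bdd_above ((\<lambda>\<xi>. l2norm (mat_apply (dg d) \<xi>)) ` {\<xi> \<in> ell2. l2norm \<xi> \<le> 1})"
  proof (rule bdd_aboveI)
    fix r assume "r \<in> (\<lambda>\<xi>. l2norm (mat_apply (dg d) \<xi>)) ` {\<xi> \<in> ell2. l2norm \<xi> \<le> 1}"
    then obtain \<xi> where a: "\<xi> \<in> ell2" "l2norm \<xi> \<le> 1" "r = l2norm (mat_apply (dg d) \<xi>)" by auto
    have b: "l2norm (\<lambda>x. d x * \<xi> x) \<le> C * l2norm \<xi>" using l2_mult[OF a(1) assms] by simp
    have "C * l2norm \<xi> \<le> C" using a(2) C0 by (rule mult_left_le)
    then show "r \<le> C" using a(3) b by (simp add: dg_apply)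
  qed
qed


lemma mult_dg_left: "mat_mult (dg a) m = (\<lambda>x y. a x * m x y)"
proof (intro ext)
  fix x y
  have "(\<lambda>z. dg a x z * m z y) = (\<lambda>z. if z = x then a x * m x y else 0)"
    by (auto simp: dg_def)
  then show "mat_mult (dg a) m x y = a x * m x y" by (simp add: mat_mult_def infsum_at)
qed

lemma mult_dg_right: "mat_mult m (dg a) = (\<lambda>x y. m x y * a y)"
proof (intro ext)
  fix x y
  have "(\<lambda>z. m x z * dg a z y) = (\<lambda>z. if z = y then m x y * a y else 0)"
    by (auto simp: dg_def)
  then show "mat_mult m (dg a) x y = m x y * a y" by (simp add: mat_mult_def infsum_at)
qed

lemma dg_mult: "mat_mult (dg a) (dg b) = dg (\<lambda>x. a x * b x)"
  by (simp add: mult_dg_left, auto simp: fun_eq_iff dg_def)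

lemma dg_adj: "mat_adj (dg a) = dg (\<lambda>x. cnj (a x))"
  by (auto simp: fun_eq_iff mat_adj_def dg_def)

lemma dg_diff: "mat_diff (dg a) (dg b) = dg (\<lambda>x. a x - b x)"
  by (auto simp: fun_eq_iff mat_diff_def dg_def)

lemma dg_add: "mat_add (dg a) (dg b) = dg (\<lambda>x. a x + b x)"
  by (auto simp: fun_eq_iff mat_add_def dg_def)

lemma dg_scale: "mat_scale c (dg a) = dg (\<lambda>x. c * a x)"
  by (auto simp: fun_eq_iff mat_scale_def dg_def)

lemma dg_id: "mat_id = dg (\<lambda>_. 1)"
  by (auto simp: fun_eq_iff mat_id_def dg_def)

lemma flow_dg: "mult_flow k t (dg a) = dg a"
  by (auto simp: fun_eq_iff mult_flow_def dg_def exp_minus field_simps)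

lemma dg_unitary:
  assumes "\<And>x. cmod (a x) = 1"
  shows "unitary_mat (dg a)"
proof -
  have "a x * cnj (a x) = 1" for x
    using assms[of x] by (metis complex_norm_square mult.commute power_one of_real_1)
  moreover have "cnj (a x) * a x = 1" for x
    using assms[of x] by (metis complex_norm_square power_one of_real_1 mult.commute)
  moreover have "bounded_mat (dg a)" by (rule dg_bounded[of _ 1]) (simp add: assms)
  ultimately show ?thesis
    by (simp add: unitary_mat_def dg_adj dg_mult dg_id)
qed

lemma zero_roe: "dg (\<lambda>_. 0) \<in> uniform_roe"
proof -
  have "partial_translation {} id" by (simp add: partial_translation_def)
  then have "mat_scale 0 (v_op {} id) \<in> uniform_roe" by (intro uniform_roe.scale uniform_roe.gen)
  moreover have "mat_scale 0 (v_op {} id) = dg (\<lambda>_. 0)" by (auto simp: fun_eq_iff mat_scale_def dg_def)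
  ultimately show ?thesis by metis
qed

lemma indic_roe: "dg (\<lambda>x. if x \<in> D then 1 else 0) \<in> uniform_roe"
proof -
  have "partial_translation D id" by (auto simp: partial_translation_def intro: exI[of _ 0])
  then have "v_op D id \<in> uniform_roe" by (rule uniform_roe.gen)
  moreover have "v_op D id = dg (\<lambda>x. if x \<in> D then 1 else 0)" by (auto simp: fun_eq_iff v_op_def dg_def)
  ultimately show ?thesis by metis
qed

lemma finite_range_roe_aux:
  assumes "finite V"
  shows "\<forall>g. range g \<subseteq> insert 0 V \<longrightarrow> dg g \<in> uniform_roe"
  using assms
proof (induction V rule: finite_induct)
  case empty
  then show ?case
  proof (intro allI impI)
    fix g :: "'a \<Rightarrow> complex" assume "range g \<subseteq> insert 0 {}"
    then have "g = (\<lambda>_. 0)" by auto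
    then show "dg g \<in> uniform_roe" using zero_roe by simp
  qed
next
  case (insert v V)
  show ?case
  proof (intro allI impI)
    fix g :: "'a \<Rightarrow> complex" assume g: "range g \<subseteq> insert 0 (insert v V)"
    define g2 where "g2 = (\<lambda>x. if g x = v then 0 else g x)"
    have "range g2 \<subseteq> insert 0 V" using g by (auto simp: g2_def)
    then have 2: "dg g2 \<in> uniform_roe" using insert.IH by blast
    have 1: "mat_scale v (dg (\<lambda>x. if x \<in> {x. g x = v} then 1 else 0)) \<in> uniform_roe"
      by (intro uniform_roe.scale indic_roe)
    have "dg g = mat_add (mat_scale v (dg (\<lambda>x. if x \<in> {x. g x = v} then 1 else 0))) (dg g2)"
      by (simp add: dg_scale dg_add, auto simp: fun_eq_iff g2_def dg_def)
    then show "dg g \<in> uniform_roe" using 1 2 by (simp add: uniform_roe.add)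
  qed
qed

lemma finite_range_roe: "finite (range g) \<Longrightarrow> dg g \<in> uniform_roe"
  using finite_range_roe_aux[of "range g"] by blast


definition qz :: "real \<Rightarrow> complex \<Rightarrow> complex" where
  "qz N z = Complex (of_int \<lfloor>N * Re z\<rfloor> / N) (of_int \<lfloor>N * Im z\<rfloor> / N)"

lemma floor_approx:
  assumes "N > 0"
  shows "\<bar>of_int \<lfloor>N * y\<rfloor> / N - y\<bar> \<le> 1 / N"
proof -
  have "of_int \<lfloor>N * y\<rfloor> \<le> N * y" "N * y < of_int \<lfloor>N * y\<rfloor> + 1" by linarith+
  then have "\<bar>of_int \<lfloor>N * y\<rfloor> - N * y\<bar> \<le> 1" by linarith
  then have "\<bar>of_int \<lfloor>N * y\<rfloor> - N * y\<bar> / N \<le> 1 / N" using assms by (simp add: divide_right_mono)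
  moreover have "of_int \<lfloor>N * y\<rfloor> / N - y = (of_int \<lfloor>N * y\<rfloor> - N * y) / N"
    using assms by (simp add: field_simps)
  then have "\<bar>of_int \<lfloor>N * y\<rfloor> - N * y\<bar> / N = \<bar>of_int \<lfloor>N * y\<rfloor> / N - y\<bar>"
    using assms by (simp add: abs_divide)
  ultimately show ?thesis by simp
qed

lemma qz_approx:
  assumes "N > 0"
  shows "cmod (qz N z - z) \<le> 2 / N"
proof -
  have "cmod (qz N z - z) \<le> \<bar>Re (qz N z - z)\<bar> + \<bar>Im (qz N z - z)\<bar>" by (rule cmod_le)
  also have "\<dots> \<le> 1 / N + 1 / N"
    using floor_approx[OF assms, of "Re z"] floor_approx[OF assms, of "Im z"]
    by (simp add: qz_def)
  finally show ?thesis by simp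
qed

lemma floor_range:
  fixes N y B :: real
  assumes "N > 0" "\<bar>y\<bar> \<le> B"
  shows "\<lfloor>N * y\<rfloor> \<in> {-(\<lceil>N * B\<rceil> + 1) .. \<lceil>N * B\<rceil> + 1}"
proof -
  have "N * y \<le> N * B" using assms by (intro mult_left_mono) auto
  moreover have "N * (- y) \<le> N * B" using assms by (intro mult_left_mono) auto
  ultimately have "N * y \<le> N * B" "- (N * B) \<le> N * y" by auto
  moreover have "of_int \<lfloor>N * y\<rfloor> \<le> N * y" "N * y < of_int \<lfloor>N * y\<rfloor> + 1" "N * B \<le> of_int \<lceil>N * B\<rceil>"
    by linarith+
  ultimately have a: "of_int \<lfloor>N * y\<rfloor> \<le> of_int \<lceil>N * B\<rceil> + (1::real)" and b: "- of_int \<lceil>N * B\<rceil> - 1 \<le> (of_int \<lfloor>N * y\<rfloor>::real)"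
    by linarith+
  have "of_int \<lfloor>N * y\<rfloor> \<le> (of_int (\<lceil>N * B\<rceil> + 1)::real)" using a by simp
  moreover have "of_int (-(\<lceil>N * B\<rceil> + 1)) \<le> (of_int \<lfloor>N * y\<rfloor>::real)" using b by simp
  ultimately show ?thesis unfolding of_int_le_iff by simp
qed

lemma qz_finite:
  assumes "N > 0" "\<And>x. cmod (d x) \<le> B"
  shows "finite (range (\<lambda>x. qz N (d x)))"
proof -
  define K where "K = \<lceil>N * B\<rceil> + 1"
  have "range (\<lambda>x. qz N (d x)) \<subseteq> (\<lambda>(i, j). Complex (of_int i / N) (of_int j / N)) ` ({-K..K} \<times> {-K..K})"
  proof
    fix z assume "z \<in> range (\<lambda>x. qz N (d x))"
    then obtain x where z: "z = qz N (d x)" by auto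
    have "\<bar>Re (d x)\<bar> \<le> B" "\<bar>Im (d x)\<bar> \<le> B"
      using assms(2)[of x] abs_Re_le_cmod[of "d x"] abs_Im_le_cmod[of "d x"] by linarith+
    then have "\<lfloor>N * Re (d x)\<rfloor> \<in> {-K..K}" "\<lfloor>N * Im (d x)\<rfloor> \<in> {-K..K}"
      using floor_range[OF assms(1)] unfolding K_def by simp_all
    then have m: "(\<lfloor>N * Re (d x)\<rfloor>, \<lfloor>N * Im (d x)\<rfloor>) \<in> {-K..K} \<times> {-K..K}" by blast
    have e: "z = (\<lambda>(i, j). Complex (of_int i / N) (of_int j / N)) (\<lfloor>N * Re (d x)\<rfloor>, \<lfloor>N * Im (d x)\<rfloor>)"
      unfolding z qz_def by simp
    show "z \<in> (\<lambda>(i, j). Complex (of_int i / N) (of_int j / N)) ` ({-K..K} \<times> {-K..K})"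
      using e m by (rule image_eqI)
  qed
  moreover have "finite ((\<lambda>(i, j). Complex (of_int i / N) (of_int j / N)) ` ({-K..K} \<times> {-K..K}))"
    by (intro finite_imageI finite_cartesian_product finite_atLeastAtMost_int)
  ultimately show ?thesis by (rule finite_subset)
qed

lemma bounded_roe:
  assumes "\<And>x. cmod (d x) \<le> B"
  shows "dg d \<in> uniform_roe"
proof (rule uniform_roe.lim)
  define s where "s n = dg (\<lambda>x. qz (real (Suc n)) (d x))" for n
  show "s n \<in> uniform_roe" for n
    unfolding s_def by (rule finite_range_roe, rule qz_finite[OF _ assms]) simp
  show "bounded_mat (dg d)" by (rule dg_bounded[OF assms])
  have le: "opnorm (mat_diff (s n) (dg d)) \<le> 2 / real (Suc n)" for n
    unfolding s_def dg_diff by (rule dg_opnorm_le) (rule qz_approx, simp)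
  have ge: "0 \<le> opnorm (mat_diff (s n) (dg d))" for n
  proof -
    have "cmod ((\<lambda>x. qz (real (Suc n)) (d x) - d x) undefined) \<le> opnorm (dg (\<lambda>x. qz (real (Suc n)) (d x) - d x))"
      by (rule dg_opnorm_ge) (rule qz_approx, simp)
    moreover have "0 \<le> cmod ((\<lambda>x. qz (real (Suc n)) (d x) - d x) undefined)" by (rule norm_ge_zero)
    ultimately show ?thesis unfolding s_def dg_diff by linarith
  qed
  have lim: "(\<lambda>n. 2 / real (Suc n)) \<longlonglongrightarrow> 0"
    using LIMSEQ_Suc[OF lim_const_over_n[of 2]] by simp
  have e1: "\<forall>n. 0 \<le> opnorm (mat_diff (s n) (dg d))" using ge by simp
  have e2: "\<forall>n. opnorm (mat_diff (s n) (dg d)) \<le> 2 / real (Suc n)" using le by simp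
  show "(\<lambda>n. opnorm (mat_diff (s n) (dg d))) \<longlonglongrightarrow> 0"
    by (rule tendsto_sandwich[OF always_eventually[OF e1] always_eventually[OF e2] tendsto_const lim])
qed



lemma iexp_lin: "cmod (exp (\<i> * complex_of_real y) - 1) \<le> \<bar>y\<bar>"
  using iexp_approx1[of y 0] by simp

lemma iexp_quad: "cmod (exp (\<i> * complex_of_real y) - 1 - \<i> * complex_of_real y) \<le> y\<^sup>2 / 2"
proof -
  have "cmod (exp (\<i> * complex_of_real y) - (\<Sum>k\<le>1. (\<i> * complex_of_real y) ^ k / fact k)) \<le> \<bar>y\<bar> ^ Suc 1 / fact (Suc 1)"
    by (rule iexp_approx1)
  then show ?thesis by (simp add: diff_diff_eq power2_eq_square)
qed

lemma close_inner:
  fixes h k :: "'a::metric_space \<Rightarrow> real"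
  assumes "bdd_above (range (\<lambda>x. \<bar>h x - k x\<bar>))"
  shows "inner_perturbation uniform_roe (mult_flow h) (mult_flow k)"
proof -
  obtain M where M: "\<And>x. \<bar>h x - k x\<bar> \<le> M" using assms by (auto simp: bdd_above_def)
  have M0: "0 \<le> M" using M[of undefined] by linarith
  define \<phi> where "\<phi> x = h x - k x" for x
  have M': "\<bar>\<phi> x\<bar> \<le> M" for x using M by (simp add: \<phi>_def)
  define w where "w t x = exp (\<i> * complex_of_real (t * \<phi> x))" for t x
  define u where "u t = dg (w t)" for t
  have wn: "cmod (w t x) = 1" for t x by (simp add: w_def)
  have roe: "u t \<in> uniform_roe" for t
    unfolding u_def by (rule bounded_roe[of _ 1]) (simp add: wn)
  have unit: "unitary_mat (u t)" for t
    unfolding u_def by (rule dg_unitary) (simp add: wn)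
  have cont: "norm_continuous u"
    unfolding norm_continuous_def
  proof
    fix t
    have b: "cmod (w s x - w t x) \<le> \<bar>s - t\<bar> * M" for s x
    proof -
      have "w s x - w t x = w t x * (exp (\<i> * complex_of_real ((s - t) * \<phi> x)) - 1)"
        by (simp add: w_def right_diff_distrib mult_exp_exp algebra_simps)
      then have "cmod (w s x - w t x) = cmod (exp (\<i> * complex_of_real ((s - t) * \<phi> x)) - 1)"
        by (simp add: norm_mult wn)
      also have "\<dots> \<le> \<bar>(s - t) * \<phi> x\<bar>" by (rule iexp_lin)
      also have "\<dots> \<le> \<bar>s - t\<bar> * M" by (simp add: abs_mult M' mult_left_mono)
      finally show ?thesis .
    qed
    have le: "opnorm (mat_diff (u s) (u t)) \<le> \<bar>s - t\<bar> * M" for s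
      unfolding u_def dg_diff by (rule dg_opnorm_le) (rule b)
    have ge: "0 \<le> opnorm (mat_diff (u s) (u t))" for s
    proof -
      have "cmod ((\<lambda>x. w s x - w t x) undefined) \<le> opnorm (dg (\<lambda>x. w s x - w t x))"
        by (rule dg_opnorm_ge) (rule b)
      moreover have "0 \<le> cmod ((\<lambda>x. w s x - w t x) undefined)" by (rule norm_ge_zero)
      ultimately show ?thesis unfolding u_def dg_diff by linarith
    qed
    have "((\<lambda>s. \<bar>s - t\<bar> * M) \<longlongrightarrow> \<bar>t - t\<bar> * M) (at t)"
      by (intro tendsto_intros)
    then have lim: "((\<lambda>s. \<bar>s - t\<bar> * M) \<longlongrightarrow> 0) (at t)" by simp
    show "((\<lambda>s. opnorm (mat_diff (u s) (u t))) \<longlongrightarrow> 0) (at t)"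
      by (rule tendsto_sandwich[of "\<lambda>_. 0" _ _ "\<lambda>s. \<bar>s - t\<bar> * M", OF _ _ _ lim])
         (auto simp: le ge)
  qed
  have coc: "u (t + s) = mat_mult (u t) (mult_flow k t (u s))" for t s
    unfolding u_def flow_dg dg_mult
    by (rule arg_cong[where f=dg], rule ext) (simp add: w_def mult_exp_exp algebra_simps)
  have cocycle: "is_cocycle uniform_roe (mult_flow k) u"
    unfolding is_cocycle_def using roe unit cont coc by blast
  define D where "D = dg (\<lambda>x. \<i> * complex_of_real (\<phi> x))"
  have Db: "bounded_mat D" unfolding D_def
    by (rule dg_bounded[of _ M]) (simp add: norm_mult M')
  have dif_b: "cmod (complex_of_real (1 / t) * (w t x - w 0 x) - \<i> * complex_of_real (\<phi> x)) \<le> \<bar>t\<bar> * M\<^sup>2 / 2"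
    if t: "t \<noteq> 0" for t x
  proof -
    have "complex_of_real (1 / t) * (w t x - w 0 x) - \<i> * complex_of_real (\<phi> x)
        = complex_of_real (1 / t) * (exp (\<i> * complex_of_real (t * \<phi> x)) - 1 - \<i> * complex_of_real (t * \<phi> x))"
      using t by (simp add: w_def field_simps)
    then have "cmod (complex_of_real (1 / t) * (w t x - w 0 x) - \<i> * complex_of_real (\<phi> x))
        = (1 / \<bar>t\<bar>) * cmod (exp (\<i> * complex_of_real (t * \<phi> x)) - 1 - \<i> * complex_of_real (t * \<phi> x))"
      by (simp only: norm_mult norm_of_real abs_divide abs_one)
    also have "\<dots> \<le> (1 / \<bar>t\<bar>) * ((t * \<phi> x)\<^sup>2 / 2)"
      by (rule mult_left_mono[OF iexp_quad]) simp
    also have "\<dots> = \<bar>t\<bar> * (\<phi> x)\<^sup>2 / 2"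
      using t by (simp add: power2_eq_square abs_mult field_simps)
    also have "\<dots> \<le> \<bar>t\<bar> * M\<^sup>2 / 2"
    proof -
      have "(\<phi> x)\<^sup>2 \<le> M\<^sup>2" using M'[of x] by (metis abs_le_square_iff abs_of_nonneg M0 power2_abs)
      then show ?thesis by (simp add: mult_left_mono divide_right_mono)
    qed
    finally show ?thesis .
  qed
  have eqD: "mat_diff (mat_scale (complex_of_real (1 / t)) (mat_diff (u t) (u 0))) D
      = dg (\<lambda>x. complex_of_real (1 / t) * (w t x - w 0 x) - \<i> * complex_of_real (\<phi> x))" for t
    unfolding u_def D_def dg_diff dg_scale ..
  have le: "opnorm (mat_diff (mat_scale (complex_of_real (1 / t)) (mat_diff (u t) (u 0))) D) \<le> \<bar>t\<bar> * M\<^sup>2 / 2"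
    if "t \<noteq> 0" for t
    unfolding eqD by (rule dg_opnorm_le) (rule dif_b[OF that])
  have ge: "0 \<le> opnorm (mat_diff (mat_scale (complex_of_real (1 / t)) (mat_diff (u t) (u 0))) D)"
    if "t \<noteq> 0" for t
  proof -
    have "cmod ((\<lambda>x. complex_of_real (1 / t) * (w t x - w 0 x) - \<i> * complex_of_real (\<phi> x)) undefined)
      \<le> opnorm (dg (\<lambda>x. complex_of_real (1 / t) * (w t x - w 0 x) - \<i> * complex_of_real (\<phi> x)))"
      by (rule dg_opnorm_ge) (rule dif_b[OF that])
    moreover have "0 \<le> cmod ((\<lambda>x. complex_of_real (1 / t) * (w t x - w 0 x) - \<i> * complex_of_real (\<phi> x)) undefined)" by (rule norm_ge_zero)
    ultimately show ?thesis unfolding eqD by linarith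
  qed
  have "((\<lambda>t. \<bar>t\<bar> * M\<^sup>2 / 2) \<longlongrightarrow> \<bar>0\<bar> * M\<^sup>2 / 2) (at (0::real))"
    by (intro tendsto_intros) simp
  then have lim: "((\<lambda>t. \<bar>t\<bar> * M\<^sup>2 / 2) \<longlongrightarrow> 0) (at (0::real))" by simp
  have ev1: "eventually (\<lambda>t. 0 \<le> opnorm (mat_diff (mat_scale (complex_of_real (1 / t)) (mat_diff (u t) (u 0))) D)) (at 0)"
    unfolding eventually_at_filter by (rule always_eventually, intro allI impI, erule ge)
  have ev2: "eventually (\<lambda>t. opnorm (mat_diff (mat_scale (complex_of_real (1 / t)) (mat_diff (u t) (u 0))) D) \<le> \<bar>t\<bar> * M\<^sup>2 / 2) (at 0)"
    unfolding eventually_at_filter by (rule always_eventually, intro allI impI, erule le)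
  have diff: "norm_differentiable_at_0 u"
    unfolding norm_differentiable_at_0_def
    using Db tendsto_sandwich[OF ev1 ev2 tendsto_const lim] by blast
  have eh: "exp (\<i> * complex_of_real (t * \<phi> x)) * exp (\<i> * complex_of_real (t * k x)) = exp (\<i> * complex_of_real (t * h x))" for t x
    by (simp add: mult_exp_exp \<phi>_def algebra_simps)
  have eh2: "exp (- \<i> * complex_of_real (t * k y)) * cnj (exp (\<i> * complex_of_real (t * \<phi> y))) = exp (- \<i> * complex_of_real (t * h y))" for t y
    by (simp add: exp_cnj mult_exp_exp \<phi>_def algebra_simps)
  have pert: "perturbed_by uniform_roe (mult_flow h) (mult_flow k) u"
    unfolding perturbed_by_def
  proof (intro allI ballI)
    fix t and a :: "'a mat" 
    show "mult_flow h t a = mat_mult (mat_mult (u t) (mult_flow k t a)) (mat_adj (u t))"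
      unfolding u_def mult_dg_left dg_adj mult_dg_right
    proof (intro ext)
      fix x y
      have "w t x * mult_flow k t a x y * cnj (w t y)
          = (exp (\<i> * complex_of_real (t * \<phi> x)) * exp (\<i> * complex_of_real (t * k x))) * a x y
            * (exp (- \<i> * complex_of_real (t * k y)) * cnj (exp (\<i> * complex_of_real (t * \<phi> y))))"
        by (simp add: w_def mult_flow_def mult_ac)
      also have "\<dots> = mult_flow h t a x y" by (simp only: eh eh2 mult_flow_def)
      finally show "mult_flow h t a x y = w t x * mult_flow k t a x y * cnj (w t y)" by simp
    qed
  qed
  show ?thesis unfolding inner_perturbation_def using cocycle diff pert by blast
qed


definition ex :: "('a \<Rightarrow> real) \<Rightarrow> real \<Rightarrow> 'a \<Rightarrow> 'a \<Rightarrow> complex" where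
  "ex f t x y = exp (\<i> * complex_of_real (t * f x)) * exp (- \<i> * complex_of_real (t * f y))"

lemma unit_flow:
  "mult_flow k t (v_op {y} (\<lambda>_. x)) = (\<lambda>a b. if a = x \<and> b = y then ex k t x y else 0)"
  by (auto simp: fun_eq_iff mult_flow_def v_op_def ex_def)

lemma conj_unit:
  "mat_mult (mat_mult m (\<lambda>a b. if a = x \<and> b = y then c else 0)) (mat_adj m)
     = (\<lambda>a b. m a x * c * cnj (m b y))"
proof -
  have 1: "mat_mult m (\<lambda>a b. if a = x \<and> b = y then c else 0) = (\<lambda>a b. if b = y then m a x * c else 0)"
  proof (intro ext)
    fix a b
    have "(\<lambda>z. m a z * (if z = x \<and> b = y then c else 0)) = (\<lambda>z. if z = x then (if b = y then m a x * c else 0) else 0)"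
      by auto
    then show "mat_mult m (\<lambda>a b. if a = x \<and> b = y then c else 0) a b = (if b = y then m a x * c else 0)"
      unfolding mat_mult_def by (simp add: infsum_at)
  qed
  show ?thesis unfolding 1
  proof (intro ext)
    fix a b
    have "(\<lambda>z. (if z = y then m a x * c else 0) * mat_adj m z b) = (\<lambda>z. if z = y then m a x * c * cnj (m b y) else 0)"
      by (auto simp: mat_adj_def)
    then show "mat_mult (\<lambda>a b. if b = y then m a x * c else 0) (mat_adj m) a b = m a x * c * cnj (m b y)"
      unfolding mat_mult_def by (simp add: infsum_at)
  qed
qed

lemma cocycle_close:
  fixes h k :: "'a::metric_space \<Rightarrow> real"
  assumes "cocycle_perturbation uniform_roe (mult_flow h) (mult_flow k)"
  shows "bdd_above (range (\<lambda>x. \<bar>h x - k x\<bar>))"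
proof -
  obtain u where cu: "is_cocycle uniform_roe (mult_flow k) u"
    and pu: "perturbed_by uniform_roe (mult_flow h) (mult_flow k) u"
    using assms unfolding cocycle_perturbation_def by blast
  define \<phi> where "\<phi> x = h x - k x" for x
  have key: "(if a = x \<and> b = y then ex h t x y else 0) = u t a x * ex k t x y * cnj (u t b y)" for t x y a b
  proof -
    have "partial_translation {y} (\<lambda>_. x)"
      unfolding partial_translation_def by (auto intro: exI[of _ "dist y x"])
    then have "v_op {y} (\<lambda>_. x) \<in> uniform_roe" by (rule uniform_roe.gen)
    then have "mult_flow h t (v_op {y} (\<lambda>_. x))
        = mat_mult (mat_mult (u t) (mult_flow k t (v_op {y} (\<lambda>_. x)))) (mat_adj (u t))"
      using pu unfolding perturbed_by_def by blast
    then have eq: "(\<lambda>a b. if a = x \<and> b = y then ex h t x y else 0) = (\<lambda>a b. u t a x * ex k t x y * cnj (u t b y))"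
      unfolding unit_flow conj_unit .
    show ?thesis using eq by (drule_tac x=a in fun_cong, drule_tac x=b in fun_cong) simp
  qed
  have exnz: "ex f t x y \<noteq> 0" for f t x y by (simp add: ex_def)
  have exdiag: "ex f t x x = 1" for f t x by (simp add: ex_def mult_exp_exp)
  have wn: "u t x x * cnj (u t x x) = 1" for t x
    using key[where a=x and x=x and b=x and y=x and t=t] by (simp add: exdiag)
  have off: "u t a x = 0" if "a \<noteq> x" for t a x
  proof -
    have "u t a x * cnj (u t x x) = 0"
      using key[where a=a and x=x and b=x and y=x and t=t] that by (simp add: exdiag)
    moreover have "cnj (u t x x) \<noteq> 0" using wn[of t x] by auto
    ultimately show ?thesis by simp
  qed
  have udg: "u t = dg (\<lambda>x. u t x x)" for t
    by (auto simp: fun_eq_iff dg_def off)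
  have cm: "cmod (u t x x) = 1" for t x
  proof -
    have "complex_of_real ((cmod (u t x x))\<^sup>2) = 1" by (simp only: complex_norm_square wn)
    then have "(cmod (u t x x))\<^sup>2 = 1" by (metis of_real_eq_1_iff)
    then have "cmod (u t x x) = 1 \<or> cmod (u t x x) = - 1" by (simp add: power2_eq_1_iff)
    moreover have "0 \<le> cmod (u t x x)" by (rule norm_ge_zero)
    ultimately show ?thesis by linarith
  qed
  have exk: "ex h t x y = ex k t x y * exp (\<i> * complex_of_real (t * (\<phi> x - \<phi> y)))" for t x y
    by (simp add: ex_def \<phi>_def mult_exp_exp algebra_simps)
  have prod: "u t x x * cnj (u t y y) = exp (\<i> * complex_of_real (t * (\<phi> x - \<phi> y)))" for t x y
  proof -
    have "ex k t x y * (u t x x * cnj (u t y y)) = ex k t x y * exp (\<i> * complex_of_real (t * (\<phi> x - \<phi> y)))"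
      using key[where a=x and x=x and b=y and y=y and t=t] exk[of t x y] by (simp add: mult_ac, metis)
    then show ?thesis using exnz[of k t x y] by simp
  qed
  have "norm_continuous u" using cu unfolding is_cocycle_def by blast
  then have "((\<lambda>s. opnorm (mat_diff (u s) (u 0))) \<longlongrightarrow> 0) (at 0)"
    unfolding norm_continuous_def by blast
  then have "eventually (\<lambda>s. opnorm (mat_diff (u s) (u 0)) < 1 / 2) (at 0)"
    by (rule order_tendstoD(2)) simp
  then obtain \<delta> :: real where d0: "\<delta> > 0"
    and dd: "\<And>s. s \<noteq> 0 \<Longrightarrow> dist s 0 < \<delta> \<Longrightarrow> opnorm (mat_diff (u s) (u 0)) < 1 / 2"
    unfolding eventually_at by blast
  have small: "cmod (u s x x - u 0 x x) < 1 / 2" if "s \<noteq> 0" "\<bar>s\<bar> < \<delta>" for s x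
  proof -
    have b: "cmod (u s z z - u 0 z z) \<le> 2" for z
      using norm_triangle_ineq4[of "u s z z" "u 0 z z"] by (simp add: cm)
    have "cmod (u s x x - u 0 x x) \<le> opnorm (dg (\<lambda>z. u s z z - u 0 z z))"
      by (rule dg_opnorm_ge[OF b])
    also have "dg (\<lambda>z. u s z z - u 0 z z) = mat_diff (u s) (u 0)"
      by (subst (2) udg, subst (2) udg, simp add: dg_diff)
    finally show ?thesis using dd[of s] that by simp
  qed
  have near: "cmod (exp (\<i> * complex_of_real (s * (\<phi> x - \<phi> y))) - 1) < 1"
    if "s \<noteq> 0" "\<bar>s\<bar> < \<delta>" for s x y
  proof -
    have e0: "u 0 x x * cnj (u 0 y y) = 1" using prod[of 0 x y] by simp
    have "exp (\<i> * complex_of_real (s * (\<phi> x - \<phi> y))) - 1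
        = (u s x x - u 0 x x) * cnj (u s y y) + u 0 x x * cnj (u s y y - u 0 y y)"
      using prod[of s x y] e0 by (simp add: algebra_simps)
    then have "cmod (exp (\<i> * complex_of_real (s * (\<phi> x - \<phi> y))) - 1)
        \<le> cmod (u s x x - u 0 x x) * cmod (cnj (u s y y)) + cmod (u 0 x x) * cmod (cnj (u s y y - u 0 y y))"
      by (metis norm_triangle_ineq norm_mult)
    also have "\<dots> = cmod (u s x x - u 0 x x) + cmod (u s y y - u 0 y y)"
      by (simp only: complex_mod_cnj cm mult_1_right mult_1_left)
    also have "\<dots> < 1" using small[OF that, of x] small[OF that, of y] by simp
    finally show ?thesis .
  qed
  define y0 :: 'a where "y0 = undefined"
  have bnd: "\<bar>\<phi> x - \<phi> y0\<bar> \<le> pi / \<delta>" for x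
  proof (rule ccontr)
    assume "\<not> \<bar>\<phi> x - \<phi> y0\<bar> \<le> pi / \<delta>"
    then have L: "pi / \<delta> < \<bar>\<phi> x - \<phi> y0\<bar>" by simp
    define L where "L = \<phi> x - \<phi> y0"
    have Lpos: "0 < \<bar>L\<bar>" using L pi_gt_zero d0 unfolding L_def
      by (meson divide_pos_pos less_trans)
    define s where "s = pi / L"
    have s0: "s \<noteq> 0" using Lpos by (simp add: s_def)
    have "pi < \<delta> * \<bar>L\<bar>" using L d0 unfolding L_def by (simp add: field_simps)
    then have sd: "\<bar>s\<bar> < \<delta>" using Lpos by (simp add: s_def abs_divide field_simps)
    have sL: "s * L = pi" using Lpos by (simp add: s_def)
    have "cmod (exp (\<i> * complex_of_real (s * L)) - 1) < 1"
      using near[OF s0 sd, of x y0] by (simp add: L_def)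
    then show False unfolding sL by simp
  qed
  show ?thesis
  proof (rule bdd_aboveI[of _ "\<bar>\<phi> y0\<bar> + pi / \<delta>"])
    fix r assume "r \<in> range (\<lambda>x. \<bar>h x - k x\<bar>)"
    then obtain x where r: "r = \<bar>\<phi> x\<bar>" by (auto simp: \<phi>_def)
    show "r \<le> \<bar>\<phi> y0\<bar> + pi / \<delta>" using bnd[of x] unfolding r by linarith
  qed
qed

theorem theorem1p4p4:
  fixes h k :: "'a::metric_space \<Rightarrow> real"
  assumes "uniformly_locally_finite (UNIV :: 'a set)"
  shows "(bdd_above (range (\<lambda>x. \<bar>h x - k x\<bar>))
          \<longleftrightarrow> inner_perturbation uniform_roe (mult_flow h) (mult_flow k)
              \<and> inner_perturbation uniform_roe (mult_flow k) (mult_flow h))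
       \<and> (inner_perturbation uniform_roe (mult_flow h) (mult_flow k)
              \<and> inner_perturbation uniform_roe (mult_flow k) (mult_flow h)
          \<longleftrightarrow> cocycle_perturbation uniform_roe (mult_flow h) (mult_flow k)
              \<and> cocycle_perturbation uniform_roe (mult_flow k) (mult_flow h))"
proof -
  have sym: "range (\<lambda>x. \<bar>k x - h x\<bar>) = range (\<lambda>x. \<bar>h x - k x\<bar>)"
    by (simp add: abs_minus_commute)
  have ic: "inner_perturbation A \<rho> \<sigma> \<Longrightarrow> cocycle_perturbation A \<rho> \<sigma>" for A and \<rho> \<sigma> :: "real \<Rightarrow> 'a mat \<Rightarrow> 'a mat"
    unfolding inner_perturbation_def cocycle_perturbation_def by blast
  have AI: "bdd_above (range (\<lambda>x. \<bar>h x - k x\<bar>)) \<Longrightarrow>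
      inner_perturbation uniform_roe (mult_flow h) (mult_flow k) \<and> inner_perturbation uniform_roe (mult_flow k) (mult_flow h)"
    using close_inner[of h k] close_inner[of k h] sym by simp
  have CA: "cocycle_perturbation uniform_roe (mult_flow h) (mult_flow k) \<Longrightarrow> bdd_above (range (\<lambda>x. \<bar>h x - k x\<bar>))"
    by (rule cocycle_close)
  have IC1: "inner_perturbation uniform_roe (mult_flow h) (mult_flow k) \<Longrightarrow> cocycle_perturbation uniform_roe (mult_flow h) (mult_flow k)"
    by (rule ic)
  have IC2: "inner_perturbation uniform_roe (mult_flow k) (mult_flow h) \<Longrightarrow> cocycle_perturbation uniform_roe (mult_flow k) (mult_flow h)"
    by (rule ic)
  show ?thesis
  proof (rule conjI; rule iffI)
    assume "bdd_above (range (\<lambda>x. \<bar>h x - k x\<bar>))"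
    then show "inner_perturbation uniform_roe (mult_flow h) (mult_flow k) \<and> inner_perturbation uniform_roe (mult_flow k) (mult_flow h)"
      by (rule AI)
  next
    assume "inner_perturbation uniform_roe (mult_flow h) (mult_flow k) \<and> inner_perturbation uniform_roe (mult_flow k) (mult_flow h)"
    then have "inner_perturbation uniform_roe (mult_flow h) (mult_flow k)" by (rule conjunct1)
    then have "cocycle_perturbation uniform_roe (mult_flow h) (mult_flow k)" by (rule IC1)
    then show "bdd_above (range (\<lambda>x. \<bar>h x - k x\<bar>))" by (rule CA)
  next
    assume "inner_perturbation uniform_roe (mult_flow h) (mult_flow k) \<and> inner_perturbation uniform_roe (mult_flow k) (mult_flow h)"
    then show "cocycle_perturbation uniform_roe (mult_flow h) (mult_flow k) \<and> cocycle_perturbation uniform_roe (mult_flow k) (mult_flow h)"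
      using IC1 IC2 by (elim conjE) (intro conjI)
  next
    assume "cocycle_perturbation uniform_roe (mult_flow h) (mult_flow k) \<and> cocycle_perturbation uniform_roe (mult_flow k) (mult_flow h)"
    then show "inner_perturbation uniform_roe (mult_flow h) (mult_flow k) \<and> inner_perturbation uniform_roe (mult_flow k) (mult_flow h)"
    proof -
      assume "cocycle_perturbation uniform_roe (mult_flow h) (mult_flow k) \<and> cocycle_perturbation uniform_roe (mult_flow k) (mult_flow h)"
      then have "cocycle_perturbation uniform_roe (mult_flow h) (mult_flow k)" by (rule conjunct1)
      then have "bdd_above (range (\<lambda>x. \<bar>h x - k x\<bar>))" by (rule CA)
      then show ?thesis by (rule AI)
    qed
  qed
qed

end
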